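(* Every valid non-entangling physical transformation of a system of $N$ elementary toy systems is a composition of local permutations (permutations of $\{1,2,3,4\}$ acting on a single elementary subsystem) and system swaps $S_{i,j}$, where $S_{i,j}(a_1,\dots,a_i,\dots,a_j,\dots,a_N) = (a_1,\dots,a_j,\dots,a_i,\dots,a_N)$.
   Context: In Spekkens' toy theory, ontic states of $N$ elementary systems are elements of $\{1,2,3,4\}^N$, and an epistemic state is a set of ontic states; only certain epistemic states are valid (those satisfying the knowledge balance principle globally and on all subsystems; equivalently, those equal to the set of ontic states fixed by some toy stabilizer group). A physical transformation is a map $T$ on ontic states, acting on epistemic states by $T(E)=\{T(o): o\in E\}$; it is valid if it maps valid epistemic states to valid epistemic states, and valid transformations are permutations of the ontic states. A product state with respect to a division of the systems into groups $A_1,\dots,A_k$ is a Cartesian product of valid epistemic states on the groups. A transformation is non-entangling if, for every division into groups $A_1,\dots,A_k$, it maps every product state with respect to that division to a product state with respect to the same division. *)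

theory Defs
  imports Main "HOL-Library.Disjoint_Sets"
begin

datatype ont = O1 | O2 | O3 | O4

text \<open>Ontic states of N elementary systems: lists of length N
  (position i is system i+1).\<close>
definition ostates :: "nat \<Rightarrow> ont list set" where
  "ostates N = {s. length s = N}"

text \<open>Single-system toy operators (Pusey's stabilizer notation):
  Z = (+1,+1,-1,-1), X = (+1,-1,+1,-1), Y = (+1,-1,-1,+1) on states 1,2,3,4.\<close>
datatype pauli = PI | PX | PY | PZ

fun pval :: "pauli \<Rightarrow> ont \<Rightarrow> int" where
  "pval PI _ = 1"
| "pval PZ O1 = 1" | "pval PZ O2 = 1" | "pval PZ O3 = -1" | "pval PZ O4 = -1"
| "pval PX O1 = 1" | "pval PX O2 = -1" | "pval PX O3 = 1" | "pval PX O4 = -1"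
| "pval PY O1 = 1" | "pval PY O2 = -1" | "pval PY O3 = -1" | "pval PY O4 = 1"

text \<open>Toy operator on N systems: a sign (True = minus) and a list of N Pauli labels.\<close>
type_synonym toyop = "bool \<times> pauli list"

definition toy_val :: "toyop \<Rightarrow> ont list \<Rightarrow> int" where
  "toy_val g s = (if fst g then -1 else 1) * (\<Prod>i<length (snd g). pval (snd g ! i) (s ! i))"

fun pmul :: "pauli \<Rightarrow> pauli \<Rightarrow> pauli" where
  "pmul PI p = p"
| "pmul p PI = p"
| "pmul PX PX = PI" | "pmul PY PY = PI" | "pmul PZ PZ = PI"
| "pmul PX PY = PZ" | "pmul PY PX = PZ"
| "pmul PY PZ = PX" | "pmul PZ PY = PX"
| "pmul PX PZ = PY" | "pmul PZ PX = PY"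

text \<open>Toy multiplication (agrees with pointwise multiplication of the value functions).\<close>
definition toy_mul :: "toyop \<Rightarrow> toyop \<Rightarrow> toyop" where
  "toy_mul g h = (fst g \<noteq> fst h, map2 pmul (snd g) (snd h))"

definition anticomm :: "pauli \<Rightarrow> pauli \<Rightarrow> bool" where
  "anticomm p q \<longleftrightarrow> p \<noteq> PI \<and> q \<noteq> PI \<and> p \<noteq> q"

definition toy_commute :: "toyop \<Rightarrow> toyop \<Rightarrow> bool" where
  "toy_commute g h \<longleftrightarrow>
     even (card {i. i < length (snd g) \<and> anticomm (snd g ! i) (snd h ! i)})"

definition minus_identity :: "nat \<Rightarrow> toyop" where
  "minus_identity N = (True, replicate N PI)"

definition toy_stabilizer_group :: "nat \<Rightarrow> toyop set \<Rightarrow> bool" where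
  "toy_stabilizer_group N G \<longleftrightarrow>
     G \<noteq> {} \<and>
     (\<forall>g\<in>G. length (snd g) = N) \<and>
     (\<forall>g\<in>G. \<forall>h\<in>G. toy_mul g h \<in> G) \<and>
     (\<forall>g\<in>G. \<forall>h\<in>G. toy_commute g h) \<and>
     minus_identity N \<notin> G"

definition valid_epi :: "nat \<Rightarrow> ont list set \<Rightarrow> bool" where
  "valid_epi N E \<longleftrightarrow>
     (\<exists>G. toy_stabilizer_group N G \<and> E = {s \<in> ostates N. \<forall>g\<in>G. toy_val g s = 1})"

definition valid_transformation :: "nat \<Rightarrow> (ont list \<Rightarrow> ont list) \<Rightarrow> bool" where
  "valid_transformation N T \<longleftrightarrow>
     T ` ostates N \<subseteq> ostates N \<and> (\<forall>E. valid_epi N E \<longrightarrow> valid_epi N (T ` E))"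

text \<open>Product state with respect to a division P of the systems {0..<N} into groups:
  Cartesian product of valid epistemic states on the groups (each group's systems
  listed in increasing order).\<close>
definition product_state :: "nat \<Rightarrow> nat set set \<Rightarrow> ont list set \<Rightarrow> bool" where
  "product_state N P E \<longleftrightarrow>
     (\<exists>Es. (\<forall>A\<in>P. valid_epi (card A) (Es A)) \<and>
           E = {s \<in> ostates N. \<forall>A\<in>P. nths s A \<in> Es A})"

definition non_entangling :: "nat \<Rightarrow> (ont list \<Rightarrow> ont list) \<Rightarrow> bool" where
  "non_entangling N T \<longleftrightarrow>
     (\<forall>P. partition_on {0..<N} P \<longrightarrow>
        (\<forall>E. product_state N P E \<longrightarrow> product_state N P (T ` E)))"

definition local_perm :: "nat \<Rightarrow> (ont \<Rightarrow> ont) \<Rightarrow> ont list \<Rightarrow> ont list" where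
  "local_perm i \<sigma> s = s[i := \<sigma> (s ! i)]"

definition sys_swap :: "nat \<Rightarrow> nat \<Rightarrow> ont list \<Rightarrow> ont list" where
  "sys_swap i j s = s[i := s ! j, j := s ! i]"

inductive_set local_swap_comps :: "nat \<Rightarrow> (ont list \<Rightarrow> ont list) set" for N where
  id: "id \<in> local_swap_comps N"
| loc: "\<lbrakk>f \<in> local_swap_comps N; i < N; bij \<sigma>\<rbrakk> \<Longrightarrow> local_perm i \<sigma> \<circ> f \<in> local_swap_comps N"
| swp: "\<lbrakk>f \<in> local_swap_comps N; i < N; j < N\<rbrakk> \<Longrightarrow> sys_swap i j \<circ> f \<in> local_swap_comps N"

end

theory Submission
  imports Defs
begin

lemma ont_UNIV: "(UNIV :: ont set) = {O1,O2,O3,O4}"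
  by (auto intro: ont.exhaust)

lemma finite_ont: "finite (UNIV :: ont set)"
  by (simp add: ont_UNIV)

lemma finite_ostates: "finite (ostates N)"
proof -
  have "ostates N = {xs. set xs \<subseteq> UNIV \<and> length xs = N}" by (auto simp: ostates_def)
  then show ?thesis using finite_lists_length_eq[OF finite_ont] by simp
qed

lemma nths_single: "i < length s \<Longrightarrow> nths s {i} = [s ! i]"
proof (induction s arbitrary: i)
  case Nil then show ?case by simp
next
  case (Cons x xs)
  show ?case
  proof (cases i)
    case 0 then show ?thesis by (simp add: nths_Cons)
  next
    case (Suc j)
    then have "{k. Suc k \<in> {i}} = {j}" by auto
    then show ?thesis using Cons Suc by (simp add: nths_Cons)
  qed
qed

lemma Collect_eq0: "{i::nat. i = 0 \<and> Q i} = (if Q 0 then {0} else {})" by auto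

lemma valid1_op:
  assumes "P \<noteq> PI"
  shows "valid_epi 1 {s \<in> ostates 1. toy_val (bb,[P]) s = 1}"
proof -
  let ?G = "{(False,[PI]), (bb,[P])}"
  have pm: "pmul P P = PI" "pmul P PI = P" "pmul PI P = P" by (cases P; simp)+
  have ac: "\<not> anticomm x y" if "x \<in> {PI,P}" "y \<in> {PI,P}" for x y
    using that by (auto simp: anticomm_def)
  have "toy_stabilizer_group 1 ?G"
    unfolding toy_stabilizer_group_def
    using assms by (auto simp: toy_mul_def pm toy_commute_def anticomm_def Collect_eq0 minus_identity_def)
  moreover have "{s \<in> ostates 1. toy_val (bb,[P]) s = 1} = {s \<in> ostates 1. \<forall>g\<in>?G. toy_val g s = 1}"
    by (auto simp: toy_val_def ostates_def)
  ultimately show ?thesis unfolding valid_epi_def by blast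
qed

lemma op_set: "{s \<in> ostates 1. toy_val (bb,[P]) s = 1} = (\<lambda>x. [x]) ` {x. (if bb then -1 else 1) * pval P x = (1::int)}"
  by (auto simp: ostates_def toy_val_def length_Suc_conv)

lemma valid1_set:
  assumes "P \<noteq> PI" "S = {x. (if bb then -1 else 1) * pval P x = (1::int)}"
  shows "valid_epi 1 ((\<lambda>x. [x]) ` S)"
  using valid1_op[OF assms(1), of bb] op_set assms(2) by simp

lemma ont_all: "(\<forall>x. P x) \<longleftrightarrow> P O1 \<and> P O2 \<and> P O3 \<and> P O4" by (metis ont.exhaust)

lemma ont_ex: "(\<exists>x. P x) \<longleftrightarrow> P O1 \<or> P O2 \<or> P O3 \<or> P O4" by (metis ont.exhaust)

lemma pairs6:
  "{x. (if False then -1 else 1) * pval PZ x = (1::int)} = {O1,O2}"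
  "{x. (if True then -1 else 1) * pval PZ x = (1::int)} = {O3,O4}"
  "{x. (if False then -1 else 1) * pval PX x = (1::int)} = {O1,O3}"
  "{x. (if True then -1 else 1) * pval PX x = (1::int)} = {O2,O4}"
  "{x. (if False then -1 else 1) * pval PY x = (1::int)} = {O1,O4}"
  "{x. (if True then -1 else 1) * pval PY x = (1::int)} = {O2,O3}"
  by (simp_all add: set_eq_iff ont_all)

lemma valid1_pair:
  assumes "a \<noteq> b"
  shows "valid_epi 1 ((\<lambda>x. [x]) ` {a,b})"
proof -
  have v: "valid_epi 1 ((\<lambda>x. [x]) ` {O1,O2})" "valid_epi 1 ((\<lambda>x. [x]) ` {O3,O4})"
    "valid_epi 1 ((\<lambda>x. [x]) ` {O1,O3})" "valid_epi 1 ((\<lambda>x. [x]) ` {O2,O4})"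
    "valid_epi 1 ((\<lambda>x. [x]) ` {O1,O4})" "valid_epi 1 ((\<lambda>x. [x]) ` {O2,O3})"
    using valid1_set[OF _ pairs6(1)[symmetric]] valid1_set[OF _ pairs6(2)[symmetric]] valid1_set[OF _ pairs6(3)[symmetric]]
      valid1_set[OF _ pairs6(4)[symmetric]] valid1_set[OF _ pairs6(5)[symmetric]] valid1_set[OF _ pairs6(6)[symmetric]] by auto
  show ?thesis using assms v by (cases a; cases b; simp add: insert_commute)
qed

lemma valid1_two:
  assumes "valid_epi 1 ((\<lambda>x. [x]) ` S)"
  shows "\<exists>a b. a \<noteq> b \<and> a \<in> S \<and> b \<in> S"
proof -
  obtain G where G: "toy_stabilizer_group 1 G"
    and E: "(\<lambda>x. [x]) ` S = {s \<in> ostates 1. \<forall>g\<in>G. toy_val g s = 1}"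
    using assms unfolding valid_epi_def by blast
  have len: "\<And>g. g \<in> G \<Longrightarrow> length (snd g) = 1" and mul: "\<And>g h. g \<in> G \<Longrightarrow> h \<in> G \<Longrightarrow> toy_mul g h \<in> G"
    and com: "\<And>g h. g \<in> G \<Longrightarrow> h \<in> G \<Longrightarrow> toy_commute g h" and mi: "(True,[PI]) \<notin> G"
    using G unfolding toy_stabilizer_group_def minus_identity_def by auto
  have memS: "x \<in> S" if "\<forall>g\<in>G. toy_val g [x] = 1" for x
  proof -
    have "[x] \<in> (\<lambda>x. [x]) ` S" using E that by (auto simp: ostates_def)
    then show ?thesis by auto
  qed
  have gform: "\<exists>c Q. g = (c,[Q])" if "g \<in> G" for g
    using len[OF that] by (cases g) (auto simp: length_Suc_conv)
  show ?thesis
  proof (cases "\<forall>g\<in>G. snd g = [PI]")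
    case True
    then have "\<forall>g\<in>G. g = (False,[PI])" using mi by (metis prod.collapse)
    then have "\<forall>g\<in>G. toy_val g [x] = 1" for x by (auto simp: toy_val_def)
    then show ?thesis using memS by (metis ont.distinct(1))
  next
    case False
    then obtain g0 where g0: "g0 \<in> G" "snd g0 \<noteq> [PI]" by blast
    obtain b P where bP: "g0 = (b,[P])" using gform[OF g0(1)] by blast
    have PnI: "P \<noteq> PI" using g0 bP by auto
    have all: "g = (False,[PI]) \<or> g = (b,[P])" if gG: "g \<in> G" for g
    proof -
      obtain c Q where cQ: "g = (c,[Q])" using gform[OF gG] by blast
      show ?thesis
      proof (cases "Q = PI")
        case True then show ?thesis using gG mi cQ by (cases c) auto
      next
        case False
        have "toy_commute g0 g" using com g0(1) gG by blast
        then have "\<not> anticomm P Q" using bP cQ by (auto simp: toy_commute_def Collect_eq0 split: if_splits)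
        then have QP: "Q = P" using False PnI by (auto simp: anticomm_def)
        have "toy_mul g0 g \<in> G" using mul g0(1) gG by blast
        moreover have "pmul P P = PI" by (cases P) auto
        ultimately have "(b \<noteq> c, [PI]) \<in> G" using bP cQ QP by (simp add: toy_mul_def)
        then have "b = c" using mi by (cases b; cases c) auto
        then show ?thesis using cQ QP by simp
      qed
    qed
    have "\<exists>x y. x \<noteq> y \<and> (if b then -1 else 1) * pval P x = (1::int) \<and> (if b then -1 else 1) * pval P y = (1::int)"
      using PnI by (cases b; cases P) (simp_all add: ont_ex)
    then obtain x y where xy: "x \<noteq> y" "(if b then -1 else 1) * pval P x = (1::int)" "(if b then -1 else 1) * pval P y = (1::int)"
      by blast
    have tv: "toy_val (b,[P]) [z] = (if b then -1 else 1) * pval P z" for z by (simp add: toy_val_def)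
    have tv1: "toy_val (False,[PI]) [z] = 1" for z by (simp add: toy_val_def)
    have fx: "\<forall>g\<in>G. toy_val g [z] = 1" if "(if b then -1 else 1) * pval P z = (1::int)" for z
      using all tv tv1 that by metis
    have "x \<in> S" "y \<in> S" using xy fx memS by blast+
    then show ?thesis using xy(1) by blast
  qed
qed

definition prodset :: "nat \<Rightarrow> (nat \<Rightarrow> ont set) \<Rightarrow> ont list set" where
  "prodset N S = {u \<in> ostates N. \<forall>i<N. u ! i \<in> S i}"

definition Pf :: "nat \<Rightarrow> nat set set" where
  "Pf N = (\<lambda>i. {i}) ` {..<N}"

lemma Pf_part: "partition_on {0..<N} (Pf N)"
  unfolding partition_on_def Pf_def disjoint_def by auto

lemma valid_sub: "valid_epi n E \<Longrightarrow> E \<subseteq> ostates n"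
  unfolding valid_epi_def by auto

lemma ps_char:
  "product_state N (Pf N) E \<longleftrightarrow> (\<exists>S. (\<forall>i<N. valid_epi 1 ((\<lambda>x. [x]) ` S i)) \<and> E = prodset N S)"
proof
  assume "product_state N (Pf N) E"
  then obtain Es where v: "\<forall>A\<in>Pf N. valid_epi (card A) (Es A)"
    and E: "E = {s \<in> ostates N. \<forall>A\<in>Pf N. nths s A \<in> Es A}"
    unfolding product_state_def by blast
  define S where "S i = {x. [x] \<in> Es {i}}" for i
  have vi: "valid_epi 1 (Es {i})" if "i < N" for i using v that by (auto simp: Pf_def)
  have im: "(\<lambda>x. [x]) ` S i = Es {i}" if "i < N" for i
  proof -
    have "Es {i} \<subseteq> ostates 1" using valid_sub[OF vi[OF that]] .
    then show ?thesis by (force simp: S_def ostates_def length_Suc_conv)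
  qed
  have "E = prodset N S"
    unfolding E prodset_def Pf_def S_def by (auto simp: ostates_def nths_single)
  then show "\<exists>S. (\<forall>i<N. valid_epi 1 ((\<lambda>x. [x]) ` S i)) \<and> E = prodset N S"
    using im vi by (intro exI[of _ S]) auto
next
  assume "\<exists>S. (\<forall>i<N. valid_epi 1 ((\<lambda>x. [x]) ` S i)) \<and> E = prodset N S"
  then obtain S where v: "\<forall>i<N. valid_epi 1 ((\<lambda>x. [x]) ` S i)" and E: "E = prodset N S" by blast
  define Es where "Es A = (\<lambda>x. [x]) ` S (Min A)" for A
  have "\<forall>A\<in>Pf N. valid_epi (card A) (Es A)" using v by (auto simp: Pf_def Es_def)
  moreover have "E = {s \<in> ostates N. \<forall>A\<in>Pf N. nths s A \<in> Es A}"
    unfolding E prodset_def Pf_def Es_def by (auto simp: ostates_def nths_single)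
  ultimately show "product_state N (Pf N) E" unfolding product_state_def by blast
qed

lemma card_prodlists:
  "card {u. length u = N \<and> (\<forall>i<N. u ! i \<in> S i)} = (\<Prod>i<N. card (S i))"
proof (induction N arbitrary: S)
  case 0
  then show ?case by simp
next
  case (Suc N)
  let ?R = "{u. length u = N \<and> (\<forall>i<N. u ! i \<in> S (Suc i))}"
  have eq: "{u. length u = Suc N \<and> (\<forall>i<Suc N. u ! i \<in> S i)} = (\<lambda>(x,u). x # u) ` (S 0 \<times> ?R)"
  proof (rule set_eqI, rule iffI)
    fix u assume "u \<in> {u. length u = Suc N \<and> (\<forall>i<Suc N. u ! i \<in> S i)}"
    then show "u \<in> (\<lambda>(x,u). x # u) ` (S 0 \<times> ?R)"
      by (cases u) (auto simp: image_iff)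
  next
    fix u assume "u \<in> (\<lambda>(x,u). x # u) ` (S 0 \<times> ?R)"
    then show "u \<in> {u. length u = Suc N \<and> (\<forall>i<Suc N. u ! i \<in> S i)}"
      by (auto simp: less_Suc_eq_0_disj)
  qed
  have inj: "inj_on (\<lambda>(x,u). x # u) (S 0 \<times> ?R)" by (auto simp: inj_on_def)
  show ?case unfolding eq card_image[OF inj] card_cartesian_product Suc.IH
    by (simp add: prod.lessThan_Suc_shift del: prod.lessThan_Suc)
qed

lemma finite_prodset: "finite (prodset N S)"
  using finite_ostates by (rule rev_finite_subset) (auto simp: prodset_def)

lemma card_prodset2:
  assumes "\<forall>i<N. card (S i) = 2"
  shows "card (prodset N S) = 2 ^ N"
proof -
  have "prodset N S = {u. length u = N \<and> (\<forall>i<N. u ! i \<in> S i)}" by (auto simp: prodset_def ostates_def)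
  then have "card (prodset N S) = (\<Prod>i<N. card (S i))" using card_prodlists by simp
  also have "\<dots> = (\<Prod>i<N. 2)" using assms by (intro prod.cong) auto
  finally show ?thesis by simp
qed

lemma F_card:
  assumes "product_state N (Pf N) B"
  shows "2 ^ N \<le> card B"
proof -
  obtain S where v: "\<forall>i<N. valid_epi 1 ((\<lambda>x. [x]) ` S i)" and B: "B = prodset N S"
    using assms ps_char by blast
  have "\<forall>i<N. \<exists>ab. fst ab \<noteq> snd ab \<and> fst ab \<in> S i \<and> snd ab \<in> S i"
    using v valid1_two by fastforce
  then obtain ab where ab: "\<forall>i<N. fst (ab i) \<noteq> snd (ab i) \<and> fst (ab i) \<in> S i \<and> snd (ab i) \<in> S i"
    by metis
  let ?S2 = "\<lambda>i. {fst (ab i), snd (ab i)}"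
  have "card (prodset N ?S2) = 2 ^ N" using ab by (intro card_prodset2) auto
  moreover have "prodset N ?S2 \<subseteq> B" unfolding B prodset_def using ab by auto
  ultimately show ?thesis using card_mono[OF _ \<open>prodset N ?S2 \<subseteq> B\<close>] B finite_prodset by metis
qed

definition other2 :: "ont \<Rightarrow> ont \<Rightarrow> ont" where
  "other2 a b = (if a \<noteq> O1 \<and> b \<noteq> O1 then O1 else if a \<noteq> O2 \<and> b \<noteq> O2 then O2 else O3)"

lemma other2: "other2 a b \<noteq> a" "other2 a b \<noteq> b"
  unfolding other2_def by auto

lemma other2': "a \<noteq> other2 a b" "b \<noteq> other2 a b"
  using other2 by metis+

definition pb :: "ont list \<Rightarrow> ont list \<Rightarrow> ont list \<Rightarrow> nat \<Rightarrow> ont set" where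
  "pb s t u i = {s ! i, if s ! i \<noteq> t ! i then t ! i else other2 (s ! i) (u ! i)}"

lemma pb_F: "product_state N (Pf N) (prodset N (pb s t u))"
proof -
  have v: "valid_epi 1 ((\<lambda>x. [x]) ` pb s t u i)" for i
    unfolding pb_def by (rule valid1_pair) (auto simp: other2')
  have "(\<forall>i<N. valid_epi 1 ((\<lambda>x. [x]) ` pb s t u i)) \<and> prodset N (pb s t u) = prodset N (pb s t u)"
    using v by simp
  then show ?thesis unfolding ps_char by (rule exI[of _ "pb s t u"])
qed

lemma pb_card: "card (prodset N (pb s t u)) = 2 ^ N"
  by (rule card_prodset2) (auto simp: pb_def other2 other2' card_insert_if)

lemma pb_mem: "s \<in> ostates N \<Longrightarrow> t \<in> ostates N \<Longrightarrow> s \<in> prodset N (pb s t u) \<and> t \<in> prodset N (pb s t u)"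
  unfolding prodset_def pb_def by auto

definition inbx :: "nat \<Rightarrow> ont list \<Rightarrow> ont list \<Rightarrow> ont list \<Rightarrow> bool" where
  "inbx N u s t \<longleftrightarrow> (\<forall>i<N. u ! i = s ! i \<or> u ! i = t ! i)"

lemma inbx_F:
  assumes "s \<in> ostates N" "t \<in> ostates N" "u \<in> ostates N"
  shows "inbx N u s t \<longleftrightarrow> (\<forall>B. product_state N (Pf N) B \<longrightarrow> s \<in> B \<longrightarrow> t \<in> B \<longrightarrow> u \<in> B)"
proof
  assume a: "inbx N u s t"
  show "\<forall>B. product_state N (Pf N) B \<longrightarrow> s \<in> B \<longrightarrow> t \<in> B \<longrightarrow> u \<in> B"
  proof (intro allI impI)
    fix B assume "product_state N (Pf N) B" "s \<in> B" "t \<in> B"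
    then obtain S where B: "B = prodset N S" using ps_char by blast
    have "u ! i \<in> S i" if "i < N" for i
    proof -
      have "s ! i \<in> S i" "t ! i \<in> S i" using \<open>s \<in> B\<close> \<open>t \<in> B\<close> that unfolding B prodset_def by auto
      moreover have "u ! i = s ! i \<or> u ! i = t ! i" using a that unfolding inbx_def by auto
      ultimately show ?thesis by auto
    qed
    then show "u \<in> B" using assms(3) unfolding B prodset_def by auto
  qed
next
  assume a: "\<forall>B. product_state N (Pf N) B \<longrightarrow> s \<in> B \<longrightarrow> t \<in> B \<longrightarrow> u \<in> B"
  then have "u \<in> prodset N (pb s t u)" using pb_F pb_mem assms by blast
  then show "inbx N u s t" unfolding prodset_def pb_def inbx_def using other2'(2) by (auto split: if_splits)
qed

lemma F_sub: "product_state N (Pf N) B \<Longrightarrow> B \<subseteq> ostates N"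
  unfolding ps_char prodset_def by auto

lemma partA:
  assumes vt: "valid_transformation N T" and ne: "non_entangling N T"
  shows "\<forall>s\<in>ostates N. T s \<in> ostates N"
    and "inj_on T (ostates N)"
    and "\<forall>s\<in>ostates N. \<forall>t\<in>ostates N. \<forall>u\<in>ostates N. inbx N u s t \<longleftrightarrow> inbx N (T u) (T s) (T t)"
proof -
  show maps: "\<forall>s\<in>ostates N. T s \<in> ostates N" using vt unfolding valid_transformation_def by auto
  have F: "product_state N (Pf N) (T ` B)" if "product_state N (Pf N) B" for B
    using ne Pf_part that unfolding non_entangling_def by blast
  show inj: "inj_on T (ostates N)"
  proof (rule inj_onI)
    fix s t assume st: "s \<in> ostates N" "t \<in> ostates N" "T s = T t"
    let ?B = "prodset N (pb s t s)"
    have c1: "card ?B = 2 ^ N" by (rule pb_card)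
    have c2: "2 ^ N \<le> card (T ` ?B)" using F_card[OF F[OF pb_F]] .
    have "card (T ` ?B) \<le> card ?B" by (rule card_image_le[OF finite_prodset])
    then have "card (T ` ?B) = card ?B" using c1 c2 by linarith
    then have "inj_on T ?B" using eq_card_imp_inj_on[OF finite_prodset] by blast
    moreover have "s \<in> ?B" "t \<in> ?B" using pb_mem[OF st(1,2)] by auto
    ultimately show "s = t" using st(3) by (meson inj_onD)
  qed
  define Fam where "Fam = {B. product_state N (Pf N) B}"
  have finFam: "finite Fam"
    by (rule finite_subset[of _ "Pow (ostates N)"]) (auto simp: Fam_def dest: F_sub intro: finite_ostates)
  have imFam: "(image T) ` Fam \<subseteq> Fam" using F by (auto simp: Fam_def)
  have injFam: "inj_on (image T) Fam"
    by (rule inj_onI) (use inj F_sub in \<open>auto simp: Fam_def inj_on_image_eq_iff\<close>)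
  have eqFam: "(image T) ` Fam = Fam" using endo_inj_surj[OF finFam imFam injFam] .
  show "\<forall>s\<in>ostates N. \<forall>t\<in>ostates N. \<forall>u\<in>ostates N. inbx N u s t \<longleftrightarrow> inbx N (T u) (T s) (T t)"
  proof (intro ballI)
    fix s t u assume stu: "s \<in> ostates N" "t \<in> ostates N" "u \<in> ostates N"
    have Tstu: "T s \<in> ostates N" "T t \<in> ostates N" "T u \<in> ostates N" using maps stu by auto
    have mem: "x \<in> B \<longleftrightarrow> T x \<in> T ` B" if "B \<in> Fam" "x \<in> ostates N" for x B
      using inj_on_image_mem_iff[OF inj that(2)] that(1) F_sub by (auto simp: Fam_def)
    have "inbx N (T u) (T s) (T t) \<longleftrightarrow> (\<forall>B\<in>Fam. T s \<in> B \<longrightarrow> T t \<in> B \<longrightarrow> T u \<in> B)"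
      using inbx_F[OF Tstu(2,3,1)] inbx_F[OF Tstu] by (auto simp: Fam_def)
    also have "\<dots> \<longleftrightarrow> (\<forall>B\<in>Fam. T s \<in> T ` B \<longrightarrow> T t \<in> T ` B \<longrightarrow> T u \<in> T ` B)"
      by (subst (1) eqFam[symmetric]) auto
    also have "\<dots> \<longleftrightarrow> (\<forall>B\<in>Fam. s \<in> B \<longrightarrow> t \<in> B \<longrightarrow> u \<in> B)"
      using mem stu by auto
    also have "\<dots> \<longleftrightarrow> inbx N u s t" using inbx_F[OF stu] by (auto simp: Fam_def)
    finally show "inbx N u s t \<longleftrightarrow> inbx N (T u) (T s) (T t)" by simp
  qed
qed

definition diffat :: "nat \<Rightarrow> ont list \<Rightarrow> ont list \<Rightarrow> nat \<Rightarrow> bool" where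
  "diffat N s t j \<longleftrightarrow> j < N \<and> s ! j \<noteq> t ! j \<and> (\<forall>i<N. i \<noteq> j \<longrightarrow> s ! i = t ! i)"

definition adj :: "nat \<Rightarrow> ont list \<Rightarrow> ont list \<Rightarrow> bool" where
  "adj N s t \<longleftrightarrow> (\<exists>j. diffat N s t j)"

lemma ostatesD: "s \<in> ostates N \<Longrightarrow> length s = N" by (simp add: ostates_def)

lemma upd_ostates: "s \<in> ostates N \<Longrightarrow> s[k := y] \<in> ostates N" by (simp add: ostates_def)

lemma eq_ostates: "s \<in> ostates N \<Longrightarrow> t \<in> ostates N \<Longrightarrow> (\<forall>i<N. s ! i = t ! i) \<Longrightarrow> s = t"
  by (simp add: ostates_def nth_equalityI)

lemma adj_iff:
  assumes "s \<in> ostates N" "t \<in> ostates N"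
  shows "adj N s t \<longleftrightarrow> s \<noteq> t \<and> (\<forall>u\<in>ostates N. inbx N u s t \<longrightarrow> u = s \<or> u = t)"
proof
  assume "adj N s t"
  then obtain j where j: "diffat N s t j" unfolding adj_def by blast
  have "s \<noteq> t" using j unfolding diffat_def by auto
  moreover have "u = s \<or> u = t" if "u \<in> ostates N" "inbx N u s t" for u
  proof (cases "u ! j = s ! j")
    case True
    then have "\<forall>i<N. u ! i = s ! i" using j that(2) unfolding diffat_def inbx_def by metis
    then show ?thesis using eq_ostates[OF that(1) assms(1)] by blast
  next
    case False
    then have "\<forall>i<N. u ! i = t ! i" using j that(2) unfolding diffat_def inbx_def by metis
    then show ?thesis using eq_ostates[OF that(1) assms(2)] by blast
  qed
  ultimately show "s \<noteq> t \<and> (\<forall>u\<in>ostates N. inbx N u s t \<longrightarrow> u = s \<or> u = t)" by blast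
next
  assume a: "s \<noteq> t \<and> (\<forall>u\<in>ostates N. inbx N u s t \<longrightarrow> u = s \<or> u = t)"
  then obtain j where j: "j < N" "s ! j \<noteq> t ! j" using eq_ostates[OF assms] by blast
  have "s ! i = t ! i" if "i < N" "i \<noteq> j" for i
  proof (rule ccontr)
    assume ne: "s ! i \<noteq> t ! i"
    let ?u = "s[j := t ! j]"
    have "?u \<in> ostates N" using upd_ostates[OF assms(1)] .
    moreover have "inbx N ?u s t" unfolding inbx_def using assms(1) j(1) by (auto simp: ostates_def nth_list_update split: if_splits)
    moreover have "?u \<noteq> s" using j assms(1) by (metis nth_list_update_eq ostatesD)
    moreover have "?u \<noteq> t" using ne that assms(1) by (metis nth_list_update_neq)
    ultimately show False using a by blast
  qed
  then show "adj N s t" unfolding adj_def diffat_def using j by blast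
qed

lemma diffat_unique: "diffat N a b p \<Longrightarrow> j < N \<Longrightarrow> a ! j \<noteq> b ! j \<Longrightarrow> j = p"
  unfolding diffat_def by blast

lemma diffat_sym: "diffat N a b p \<Longrightarrow> diffat N b a p"
  unfolding diffat_def by metis

lemma upd_diffat: "s \<in> ostates N \<Longrightarrow> i < N \<Longrightarrow> x \<noteq> s ! i \<Longrightarrow> diffat N s (s[i := x]) i"
  unfolding diffat_def by (auto simp: ostates_def)

lemma two_diff:
  assumes "diffat N z a j" "diffat N z b j" "a \<noteq> b" "a \<in> ostates N" "b \<in> ostates N"
  shows "diffat N a b j"
proof -
  have o: "\<forall>i<N. i \<noteq> j \<longrightarrow> a ! i = b ! i" using assms(1,2) unfolding diffat_def by metis
  then have "a ! j \<noteq> b ! j" using assms(3) eq_ostates[OF assms(4,5)] by metis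
  then show ?thesis using o assms(1) unfolding diffat_def by blast
qed

lemma not_adj2:
  assumes "s \<in> ostates N" "i \<noteq> k" "i < N" "k < N" "x \<noteq> s ! i" "y \<noteq> s ! k"
  shows "\<not> adj N (s[i := x]) (s[k := y])"
proof
  assume "adj N (s[i := x]) (s[k := y])"
  then obtain p where p: "diffat N (s[i := x]) (s[k := y]) p" unfolding adj_def by blast
  have l: "length s = N" using assms(1) by (simp add: ostates_def)
  have "i = p" using diffat_unique[OF p assms(3)] assms l by auto
  moreover have "k = p" using diffat_unique[OF p assms(4)] assms l by auto
  ultimately show False using assms(2) by simp
qed

lemma conn:
  assumes "s \<in> ostates N" "t \<in> ostates N" "Q s"
    and step: "\<And>u k. u \<in> ostates N \<Longrightarrow> k < N \<Longrightarrow> Q u \<Longrightarrow> Q (u[k := t ! k])"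
  shows "Q t"
proof -
  have "m \<le> N \<Longrightarrow> \<exists>u\<in>ostates N. Q u \<and> (\<forall>i<m. u ! i = t ! i)" for m
  proof (induction m)
    case 0 then show ?case using assms by auto
  next
    case (Suc m)
    then obtain u where u: "u \<in> ostates N" "Q u" "\<forall>i<m. u ! i = t ! i" by auto
    have "u[m := t ! m] \<in> ostates N" using upd_ostates[OF u(1)] .
    moreover have "Q (u[m := t ! m])" using step[OF u(1) _ u(2)] Suc.prems by simp
    moreover have "\<forall>i<Suc m. u[m := t ! m] ! i = t ! i"
      using u(1,3) Suc.prems by (auto simp: ostates_def nth_list_update less_Suc_eq)
    ultimately show ?case by blast
  qed
  then obtain u where "u \<in> ostates N" "Q u" "\<forall>i<N. u ! i = t ! i" by blast
  then show ?thesis using eq_ostates[OF _ assms(2)] by metis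
qed

locale hiso =
  fixes N :: nat and T :: "ont list \<Rightarrow> ont list"
  assumes maps: "s \<in> ostates N \<Longrightarrow> T s \<in> ostates N"
    and inj: "inj_on T (ostates N)"
    and pres: "s \<in> ostates N \<Longrightarrow> t \<in> ostates N \<Longrightarrow> u \<in> ostates N \<Longrightarrow>
       inbx N u s t \<longleftrightarrow> inbx N (T u) (T s) (T t)"
begin

lemma surj: "T ` ostates N = ostates N"
  by (rule endo_inj_surj[OF finite_ostates _ inj]) (auto intro: maps)

lemma Tinj: "s \<in> ostates N \<Longrightarrow> t \<in> ostates N \<Longrightarrow> T s = T t \<longleftrightarrow> s = t"
  using inj by (meson inj_on_eq_iff)

lemma adj_pres:
  assumes st: "s \<in> ostates N" "t \<in> ostates N"
  shows "adj N (T s) (T t) \<longleftrightarrow> adj N s t"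
proof -
  have Ts: "T s \<in> ostates N" "T t \<in> ostates N" using maps st by auto
  have "(\<forall>v\<in>ostates N. inbx N v (T s) (T t) \<longrightarrow> v = T s \<or> v = T t) \<longleftrightarrow>
        (\<forall>u\<in>ostates N. inbx N (T u) (T s) (T t) \<longrightarrow> T u = T s \<or> T u = T t)"
  proof
    assume h: "\<forall>v\<in>ostates N. inbx N v (T s) (T t) \<longrightarrow> v = T s \<or> v = T t"
    show "\<forall>u\<in>ostates N. inbx N (T u) (T s) (T t) \<longrightarrow> T u = T s \<or> T u = T t"
      using h maps by blast
  next
    assume h: "\<forall>u\<in>ostates N. inbx N (T u) (T s) (T t) \<longrightarrow> T u = T s \<or> T u = T t"
    show "\<forall>v\<in>ostates N. inbx N v (T s) (T t) \<longrightarrow> v = T s \<or> v = T t"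
    proof (intro ballI impI)
      fix v assume v: "v \<in> ostates N" "inbx N v (T s) (T t)"
      then obtain u where "u \<in> ostates N" "v = T u" using surj by blast
      then show "v = T s \<or> v = T t" using h v by blast
    qed
  qed
  also have "\<dots> \<longleftrightarrow> (\<forall>u\<in>ostates N. inbx N u s t \<longrightarrow> u = s \<or> u = t)"
    using pres[OF st] Tinj st by auto
  finally show ?thesis unfolding adj_iff[OF Ts] adj_iff[OF st] using Tinj[OF st] by blast
qed

definition D :: "ont list \<Rightarrow> nat \<Rightarrow> ont \<Rightarrow> nat \<Rightarrow> bool" where
  "D s i x j \<longleftrightarrow> diffat N (T s) (T (s[i := x])) j"

lemma K0:
  assumes "s \<in> ostates N" "i < N" "x \<noteq> s ! i"
  shows "\<exists>j. D s i x j"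
proof -
  have "adj N s (s[i := x])" using upd_diffat[OF assms] unfolding adj_def by blast
  then have "adj N (T s) (T (s[i := x]))" using adj_pres assms(1) upd_ostates by blast
  then show ?thesis unfolding adj_def D_def .
qed

lemma K1:
  assumes s: "s \<in> ostates N" and i: "i < N" and x: "x \<noteq> s ! i" and y: "y \<noteq> s ! i"
    and D: "D s i x j"
  shows "D s i y j"
proof (cases "x = y")
  case True then show ?thesis using D by simp
next
  case False
  obtain j' where j': "D s i y j'" using K0[OF s i y] by blast
  have l: "length s = N" using s by (simp add: ostates_def)
  have "s[i := x] ! i \<noteq> s[i := y] ! i" using False i l by simp
  moreover have "(s[i := x]) ! i' = (s[i := y]) ! i'" if "i' \<noteq> i" for i' using that by simp
  ultimately have "diffat N (s[i := x]) (s[i := y]) i" unfolding diffat_def using i by blast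
  then have "adj N (s[i := x]) (s[i := y])" unfolding adj_def by blast
  then have "adj N (T (s[i := x])) (T (s[i := y]))" using adj_pres upd_ostates[OF s] by blast
  then obtain p where p: "diffat N (T (s[i := x])) (T (s[i := y])) p" unfolding adj_def by blast
  show ?thesis
  proof (rule ccontr)
    assume "\<not> D s i y j"
    then have ne: "j' \<noteq> j" using j' by auto
    have dj: "diffat N (T s) (T (s[i := x])) j" and dj': "diffat N (T s) (T (s[i := y])) j'"
      using D j' unfolding D_def by auto
    have "T (s[i := x]) ! j \<noteq> T (s[i := y]) ! j" using dj dj' ne unfolding diffat_def by metis
    then have "j = p" using diffat_unique[OF p] dj unfolding diffat_def by blast
    moreover have "T (s[i := x]) ! j' \<noteq> T (s[i := y]) ! j'" using dj dj' ne unfolding diffat_def by metis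
    then have "j' = p" using diffat_unique[OF p] dj' unfolding diffat_def by blast
    ultimately show False using ne by simp
  qed
qed

lemma K2:
  assumes s: "s \<in> ostates N" and i: "i < N" and k: "k < N" and ki: "k \<noteq> i"
    and x: "x \<noteq> s ! i" and y: "y \<noteq> s ! k" and D: "D s i x j"
  shows "D (s[k := y]) i x j"
proof -
  have l: "length s = N" using s by (simp add: ostates_def)
  define z where "z = T s"
  define a where "a = T (s[i := x])"
  define b where "b = T (s[k := y])"
  define c where "c = T ((s[k := y])[i := x])"
  have sk: "s[k := y] \<in> ostates N" using upd_ostates[OF s] .
  have ski: "(s[k := y])[i := x] \<in> ostates N" using upd_ostates[OF sk] .
  have si: "s[i := x] \<in> ostates N" using upd_ostates[OF s] .
  have zO: "z \<in> ostates N" "a \<in> ostates N" "b \<in> ostates N" "c \<in> ostates N"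
    unfolding z_def a_def b_def c_def using maps s si sk ski by auto
  have dj: "diffat N z a j" using D unfolding D_def z_def a_def .
  obtain j' where dj': "diffat N z b j'" using K0[OF s k y] unfolding D_def z_def b_def by blast
  have jj': "j \<noteq> j'"
  proof
    assume "j = j'"
    have "a \<noteq> b"
    proof -
      have "s[i := x] \<noteq> s[k := y]" using ki i l x by (metis nth_list_update_eq nth_list_update_neq)
      then show ?thesis using Tinj[OF si sk] unfolding a_def b_def by blast
    qed
    then have "diffat N a b j" using two_diff[OF dj] dj' \<open>j = j'\<close> zO by blast
    then have "adj N a b" unfolding adj_def by blast
    then have "adj N (s[i := x]) (s[k := y])" using adj_pres[OF si sk] unfolding a_def b_def by blast
    then show False using not_adj2[OF s ki[symmetric] i k x y] by blast
  qed
  have x': "x \<noteq> s[k := y] ! i" using x ki by simp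
  obtain q where q: "diffat N b c q" using K0[OF sk i x'] unfolding D_def b_def c_def by blast
  have sw: "(s[k := y])[i := x] = (s[i := x])[k := y]" using ki by (simp add: list_update_swap)
  have y': "y \<noteq> s[i := x] ! k" using y ki by simp
  obtain p where p: "diffat N a c p" using K0[OF si k y'] unfolding D_def a_def c_def sw by blast
  have cz: "c \<noteq> z"
  proof -
    have "(s[k := y])[i := x] \<noteq> s" using x i l by (metis nth_list_update_eq length_list_update)
    then show ?thesis using Tinj[OF ski s] unfolding c_def z_def by blast
  qed
  have jN: "j < N" using dj unfolding diffat_def by blast
  have "q = j"
  proof (rule ccontr)
    assume qj: "q \<noteq> j"
    have "c ! j = b ! j" using q qj jN unfolding diffat_def by metis
    also have "\<dots> = z ! j" using dj' jj' jN unfolding diffat_def by metis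
    finally have cj: "c ! j = z ! j" .
    have "a ! j \<noteq> z ! j" using dj unfolding diffat_def by metis
    then have "c ! j \<noteq> a ! j" using cj by simp
    then have jp: "j = p" using diffat_unique[OF p jN] by metis
    have "\<forall>i'<N. c ! i' = z ! i'"
    proof (intro allI impI)
      fix i' assume iN: "i' < N"
      show "c ! i' = z ! i'"
      proof (cases "i' = j")
        case True then show ?thesis using cj by simp
      next
        case False
        then have "c ! i' = a ! i'" using p jp iN unfolding diffat_def by metis
        also have "\<dots> = z ! i'" using dj False iN unfolding diffat_def by metis
        finally show ?thesis .
      qed
    qed
    then have "c = z" using eq_ostates zO by blast
    then show False using cz by simp
  qed
  then show ?thesis using q unfolding D_def b_def c_def by simp
qed

definition good :: "ont list \<Rightarrow> nat \<Rightarrow> nat \<Rightarrow> bool" where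
  "good s i j \<longleftrightarrow> (\<forall>x. x \<noteq> s ! i \<longrightarrow> D s i x j)"

lemma K3:
  assumes s: "s \<in> ostates N" and i: "i < N" and k: "k < N" and g: "good s i j"
  shows "good (s[k := y]) i j"
proof (cases "y = s ! k")
  case True then show ?thesis using g by simp
next
  case False
  show ?thesis
  proof (cases "k = i")
    case False
    then show ?thesis using K2[OF s i k False _ \<open>y \<noteq> s ! k\<close>] g unfolding good_def by simp
  next
    case True
    have l: "length s = N" using s by (simp add: ostates_def)
    have si: "s[i := y] \<in> ostates N" using upd_ostates[OF s] .
    have yi: "y \<noteq> s ! i" using False True by simp
    have "D s i y j" using g yi unfolding good_def by blast
    then have "D (s[i := y]) i (s ! i) j" unfolding D_def using diffat_sym by (simp add: l)
    moreover have "s ! i \<noteq> s[i := y] ! i" using yi i l by simp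
    ultimately have "good (s[i := y]) i j" unfolding good_def using K1[OF si i] by blast
    then show ?thesis using True by simp
  qed
qed

lemma good_all:
  assumes "s \<in> ostates N" "t \<in> ostates N" "i < N" "good s i j"
  shows "good t i j"
  using conn[of s N t "\<lambda>u. good u i j"] assms K3 by blast

definition s0 :: "ont list" where "s0 = replicate N O1"

lemma s0O: "s0 \<in> ostates N" by (simp add: s0_def ostates_def)

lemma s0i: "i < N \<Longrightarrow> s0 ! i = O1" by (simp add: s0_def)

lemma exists_dir: "i < N \<Longrightarrow> \<exists>j. good s0 i j"
proof -
  assume i: "i < N"
  have x: "O2 \<noteq> s0 ! i" using s0i[OF i] by simp
  obtain j where "D s0 i O2 j" using K0[OF s0O i x] by blast
  then have "good s0 i j" unfolding good_def using K1[OF s0O i x] by blast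
  then show ?thesis by blast
qed

definition pi :: "nat \<Rightarrow> nat" where "pi i = (SOME j. good s0 i j)"

lemma good_pi: "s \<in> ostates N \<Longrightarrow> i < N \<Longrightarrow> good s i (pi i)"
proof -
  assume s: "s \<in> ostates N" and i: "i < N"
  have "good s0 i (pi i)" unfolding pi_def by (rule someI_ex[OF exists_dir[OF i]])
  then show "good s i (pi i)" using good_all[OF s0O s i] by blast
qed

lemma pi_lt: assumes i: "i < N" shows "pi i < N"
proof -
  have "D s0 i O2 (pi i)" using good_pi[OF s0O i] s0i[OF i] unfolding good_def by simp
  then show ?thesis unfolding D_def diffat_def by blast
qed

lemma pi_inj:
  assumes i: "i < N" and k: "k < N" and eq: "pi i = pi k"
  shows "i = k"
proof (rule ccontr)
  assume ik: "i \<noteq> k"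
  have x: "O2 \<noteq> s0 ! i" "O2 \<noteq> s0 ! k" using s0i i k by auto
  have si: "s0[i := O2] \<in> ostates N" "s0[k := O2] \<in> ostates N" using upd_ostates[OF s0O] by auto
  have d1: "diffat N (T s0) (T (s0[i := O2])) (pi i)" using good_pi[OF s0O i] x unfolding good_def D_def by blast
  have d2: "diffat N (T s0) (T (s0[k := O2])) (pi i)" using good_pi[OF s0O k] x eq unfolding good_def D_def by simp
  have l: "length s0 = N" by (simp add: s0_def)
  have "s0[i := O2] ! i \<noteq> s0[k := O2] ! i" using ik i l s0i[OF i] by simp
  then have "s0[i := O2] \<noteq> s0[k := O2]" by metis
  then have "T (s0[i := O2]) \<noteq> T (s0[k := O2])" using Tinj[OF si] by blast
  then have "diffat N (T (s0[i := O2])) (T (s0[k := O2])) (pi i)" using two_diff[OF d1 d2] maps si by blast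
  then have "adj N (T (s0[i := O2])) (T (s0[k := O2]))" unfolding adj_def by blast
  then have "adj N (s0[i := O2]) (s0[k := O2])" using adj_pres[OF si] by blast
  then show False using not_adj2[OF s0O ik i k x] by blast
qed

lemma move_other:
  assumes s: "s \<in> ostates N" and i: "i < N" and k: "k < N" and ki: "k \<noteq> i"
  shows "T (s[k := y]) ! pi i = T s ! pi i"
proof (cases "y = s ! k")
  case True then show ?thesis by simp
next
  case False
  have "D s k y (pi k)" using good_pi[OF s k] False unfolding good_def by blast
  then have d: "diffat N (T s) (T (s[k := y])) (pi k)" unfolding D_def .
  have "pi i \<noteq> pi k" using pi_inj[OF i k] ki by blast
  then show ?thesis using d pi_lt[OF i] unfolding diffat_def by metis
qed

definition sig :: "nat \<Rightarrow> ont \<Rightarrow> ont" where "sig i a = T (s0[i := a]) ! pi i"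

lemma rep:
  assumes s: "s \<in> ostates N" and i: "i < N"
  shows "T s ! pi i = sig i (s ! i)"
proof -
  let ?Q = "\<lambda>u. u ! i = s ! i \<and> T u ! pi i = sig i (s ! i)"
  have u0: "s0[i := s ! i] \<in> ostates N" using upd_ostates[OF s0O] .
  have "?Q (s0[i := s ! i])" using i by (simp add: sig_def s0_def)
  moreover have "?Q (u[k := s ! k])" if "u \<in> ostates N" "k < N" "?Q u" for u k
  proof (cases "k = i")
    case True then show ?thesis using that by (metis list_update_id)
  next
    case False
    then show ?thesis using that move_other[OF that(1) i that(2) False] by simp
  qed
  ultimately have "?Q s" using conn[OF u0 s, of ?Q] by blast
  then show ?thesis by simp
qed

lemma sig_inj: assumes i: "i < N" shows "inj (sig i)"
proof (rule injI)
  fix a b assume eq: "sig i a = sig i b"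
  show "a = b"
  proof (rule ccontr)
    assume ab: "a \<noteq> b"
    let ?u = "s0[i := a]"
    have u: "?u \<in> ostates N" using upd_ostates[OF s0O] .
    have l: "length s0 = N" by (simp add: s0_def)
    have "b \<noteq> ?u ! i" using ab i l by simp
    then have "D ?u i b (pi i)" using good_pi[OF u i] unfolding good_def by blast
    then have "T ?u ! pi i \<noteq> T (?u[i := b]) ! pi i" unfolding D_def diffat_def by blast
    then show False using eq unfolding sig_def by simp
  qed
qed

end

lemma lsc_comp:
  assumes f: "f \<in> local_swap_comps N" and g: "g \<in> local_swap_comps N"
  shows "f \<circ> g \<in> local_swap_comps N"
  using f
proof (induction f rule: local_swap_comps.induct)
  case id then show ?case using g by simp
next
  case (loc f i \<sigma>)
  have "local_perm i \<sigma> \<circ> (f \<circ> g) \<in> local_swap_comps N" using loc.IH loc.hyps by (intro local_swap_comps.loc)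
  then show ?case by (metis comp_assoc)
next
  case (swp f i j)
  have "sys_swap i j \<circ> (f \<circ> g) \<in> local_swap_comps N" using swp.IH swp.hyps by (intro local_swap_comps.swp)
  then show ?case by (metis comp_assoc)
qed

lemma local_perm_nth: "k < length v \<Longrightarrow> i < length v \<Longrightarrow> local_perm k \<sigma> v ! i = (if i = k then \<sigma> (v ! k) else v ! i)"
  by (simp add: local_perm_def nth_list_update)

lemma lsc_local:
  assumes bij: "\<forall>i<N. bij (\<sigma> i)"
  shows "\<exists>f\<in>local_swap_comps N. \<forall>s\<in>ostates N. f s \<in> ostates N \<and> (\<forall>i<N. f s ! i = \<sigma> i (s ! i))"
proof -
  have "k \<le> N \<Longrightarrow> \<exists>f\<in>local_swap_comps N. \<forall>s\<in>ostates N. f s \<in> ostates N \<and>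
          (\<forall>i<N. f s ! i = (if i < k then \<sigma> i (s ! i) else s ! i))" for k
  proof (induction k)
    case 0
    have "id \<in> local_swap_comps N" by (rule local_swap_comps.id)
    then show ?case by (intro bexI[of _ id]) auto
  next
    case (Suc k)
    then obtain f where f: "f \<in> local_swap_comps N"
      and fs: "\<forall>s\<in>ostates N. f s \<in> ostates N \<and> (\<forall>i<N. f s ! i = (if i < k then \<sigma> i (s ! i) else s ! i))"
      by auto
    have kN: "k < N" using Suc.prems by simp
    have "local_perm k (\<sigma> k) \<circ> f \<in> local_swap_comps N"
      using f kN bij by (intro local_swap_comps.loc) auto
    moreover have "\<forall>s\<in>ostates N. (local_perm k (\<sigma> k) \<circ> f) s \<in> ostates N \<and>
          (\<forall>i<N. (local_perm k (\<sigma> k) \<circ> f) s ! i = (if i < Suc k then \<sigma> i (s ! i) else s ! i))"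
    proof
      fix s assume s: "s \<in> ostates N"
      have fO: "f s \<in> ostates N" and fn: "\<forall>i<N. f s ! i = (if i < k then \<sigma> i (s ! i) else s ! i)"
        using fs s by auto
      have l: "length (f s) = N" using fO by (simp add: ostates_def)
      show "(local_perm k (\<sigma> k) \<circ> f) s \<in> ostates N \<and>
          (\<forall>i<N. (local_perm k (\<sigma> k) \<circ> f) s ! i = (if i < Suc k then \<sigma> i (s ! i) else s ! i))"
      proof
        show "(local_perm k (\<sigma> k) \<circ> f) s \<in> ostates N" using l by (simp add: ostates_def local_perm_def)
        show "\<forall>i<N. (local_perm k (\<sigma> k) \<circ> f) s ! i = (if i < Suc k then \<sigma> i (s ! i) else s ! i)"
        proof (intro allI impI)
          fix i assume iN: "i < N"
          have fk: "f s ! k = s ! k" using fn kN by simp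
          show "(local_perm k (\<sigma> k) \<circ> f) s ! i = (if i < Suc k then \<sigma> i (s ! i) else s ! i)"
          proof (cases "i = k")
            case True then show ?thesis using local_perm_nth[of k "f s" i] l kN fk by simp
          next
            case False then show ?thesis using local_perm_nth[of k "f s" i] l kN iN fn by auto
          qed
        qed
      qed
    qed
    ultimately show ?case by blast
  qed
  from this[of N] show ?thesis by auto
qed

definition swp :: "nat \<Rightarrow> nat \<Rightarrow> nat \<Rightarrow> nat" where
  "swp k m x = (if x = k then m else if x = m then k else x)"

lemma sys_swap_nth:
  assumes "k < length s" "m < length s" "x < length s"
  shows "sys_swap k m s ! x = s ! swp k m x"
  using assms by (auto simp: sys_swap_def swp_def nth_list_update)

lemma swp_bij: "k < N \<Longrightarrow> m < N \<Longrightarrow> bij_betw (swp k m) {..<N} {..<N}"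
  by (rule bij_betwI[where g = "swp k m"]) (auto simp: swp_def)

lemma lsc_perm:
  assumes rho: "bij_betw \<rho> {..<N} {..<N}"
  shows "\<exists>f\<in>local_swap_comps N. \<forall>s\<in>ostates N. f s \<in> ostates N \<and> (\<forall>j<N. f s ! j = s ! \<rho> j)"
proof -
  have "\<forall>\<rho>. bij_betw \<rho> {..<N} {..<N} \<and> (\<forall>j. k \<le> j \<and> j < N \<longrightarrow> \<rho> j = j) \<longrightarrow>
     (\<exists>f\<in>local_swap_comps N. \<forall>s\<in>ostates N. f s \<in> ostates N \<and> (\<forall>j<N. f s ! j = s ! \<rho> j))" for k
  proof (induction k)
    case 0
    show ?case
    proof (intro allI impI)
      fix \<rho> :: "nat \<Rightarrow> nat" assume "bij_betw \<rho> {..<N} {..<N} \<and> (\<forall>j. 0 \<le> j \<and> j < N \<longrightarrow> \<rho> j = j)"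
      then have "\<forall>j<N. \<rho> j = j" by auto
      moreover have "id \<in> local_swap_comps N" by (rule local_swap_comps.id)
      ultimately show "\<exists>f\<in>local_swap_comps N. \<forall>s\<in>ostates N. f s \<in> ostates N \<and> (\<forall>j<N. f s ! j = s ! \<rho> j)"
        by (intro bexI[of _ id]) auto
    qed
  next
    case (Suc k)
    show ?case
    proof (intro allI impI)
      fix \<rho> :: "nat \<Rightarrow> nat" assume h: "bij_betw \<rho> {..<N} {..<N} \<and> (\<forall>j. Suc k \<le> j \<and> j < N \<longrightarrow> \<rho> j = j)"
      show "\<exists>f\<in>local_swap_comps N. \<forall>s\<in>ostates N. f s \<in> ostates N \<and> (\<forall>j<N. f s ! j = s ! \<rho> j)"
      proof (cases "k < N")
        case False
        then have "\<forall>j. k \<le> j \<and> j < N \<longrightarrow> \<rho> j = j" by auto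
        then show ?thesis using Suc.IH h by blast
      next
        case True
        define m where "m = \<rho> k"
        have mN: "m < N" using h True unfolding m_def bij_betw_def by auto
        define \<rho>' where "\<rho>' = swp k m \<circ> \<rho>"
        have b': "bij_betw \<rho>' {..<N} {..<N}"
          unfolding \<rho>'_def using h swp_bij[OF True mN] bij_betw_trans by blast
        have fix': "\<rho>' j = j" if "k \<le> j" "j < N" for j
        proof (cases "j = k")
          case True then show ?thesis by (simp add: \<rho>'_def m_def swp_def)
        next
          case False
          then have rj: "\<rho> j = j" using h that by auto
          have "j \<noteq> m"
          proof
            assume "j = m"
            then have "\<rho> k = \<rho> j" using rj m_def by simp
            then have "k = j" using h True that unfolding bij_betw_def inj_on_def by auto
            then show False using False by simp
          qed
          then show ?thesis using rj False by (simp add: \<rho>'_def swp_def)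
        qed
        obtain f' where f': "f' \<in> local_swap_comps N"
          and f's: "\<forall>s\<in>ostates N. f' s \<in> ostates N \<and> (\<forall>j<N. f' s ! j = s ! \<rho>' j)"
          using Suc.IH b' fix' by blast
        have "sys_swap k m \<circ> id \<in> local_swap_comps N"
          using True mN by (intro local_swap_comps.swp local_swap_comps.id)
        then have "f' \<circ> sys_swap k m \<in> local_swap_comps N" using lsc_comp[OF f'] by simp
        moreover have "\<forall>s\<in>ostates N. (f' \<circ> sys_swap k m) s \<in> ostates N \<and> (\<forall>j<N. (f' \<circ> sys_swap k m) s ! j = s ! \<rho> j)"
        proof
          fix s assume s: "s \<in> ostates N"
          have l: "length s = N" using s by (simp add: ostates_def)
          have sO: "sys_swap k m s \<in> ostates N" using s by (simp add: sys_swap_def ostates_def)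
          have "\<forall>j<N. f' (sys_swap k m s) ! j = s ! \<rho> j"
          proof (intro allI impI)
            fix j assume j: "j < N"
            have rj: "\<rho> j < N" using h j unfolding bij_betw_def by auto
            have r'j: "\<rho>' j < N" using b' j unfolding bij_betw_def by auto
            have "f' (sys_swap k m s) ! j = sys_swap k m s ! \<rho>' j" using f's sO j by blast
            also have "\<dots> = s ! swp k m (\<rho>' j)" using sys_swap_nth l True mN r'j by simp
            also have "swp k m (\<rho>' j) = \<rho> j" by (simp add: \<rho>'_def swp_def)
            finally show "f' (sys_swap k m s) ! j = s ! \<rho> j" .
          qed
          then show "(f' \<circ> sys_swap k m) s \<in> ostates N \<and> (\<forall>j<N. (f' \<circ> sys_swap k m) s ! j = s ! \<rho> j)"
            using f's sO by simp
        qed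
        ultimately show ?thesis by blast
      qed
    qed
  qed
  from this[of N] rho show ?thesis by auto
qed

theorem mainTheorem10:
  fixes N :: nat and T :: "ont list \<Rightarrow> ont list"
  assumes "valid_transformation N T"
    and "non_entangling N T"
  shows "\<exists>f \<in> local_swap_comps N. \<forall>s \<in> ostates N. T s = f s"
proof -
  note pa = partA[OF assms]
  interpret h: hiso N T
    using pa by unfold_locales blast+
  have injpi: "inj_on h.pi {..<N}" using h.pi_inj by (auto simp: inj_on_def)
  have impi: "h.pi ` {..<N} \<subseteq> {..<N}" using h.pi_lt by auto
  have pibij: "bij_betw h.pi {..<N} {..<N}"
    unfolding bij_betw_def using endo_inj_surj[OF _ impi injpi] injpi by simp
  define \<rho> where "\<rho> = inv_into {..<N} h.pi"
  have rbij: "bij_betw \<rho> {..<N} {..<N}" unfolding \<rho>_def by (rule bij_betw_inv_into[OF pibij])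
  have pr: "h.pi (\<rho> j) = j" if "j < N" for j
    unfolding \<rho>_def using that pibij by (simp add: bij_betw_def f_inv_into_f)
  have rlt: "\<rho> j < N" if "j < N" for j using rbij that unfolding bij_betw_def by auto
  have sbij: "\<forall>i<N. bij (h.sig i)"
    using h.sig_inj finite_UNIV_inj_surj[OF finite_ont] by (auto simp: bij_def)
  obtain fL where fL: "fL \<in> local_swap_comps N"
    and fLs: "\<forall>s\<in>ostates N. fL s \<in> ostates N \<and> (\<forall>i<N. fL s ! i = h.sig i (s ! i))"
    using lsc_local[OF sbij] by blast
  obtain fP where fP: "fP \<in> local_swap_comps N"
    and fPs: "\<forall>s\<in>ostates N. fP s \<in> ostates N \<and> (\<forall>j<N. fP s ! j = s ! \<rho> j)"
    using lsc_perm[OF rbij] by blast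
  have "\<forall>s\<in>ostates N. T s = (fP \<circ> fL) s"
  proof
    fix s assume s: "s \<in> ostates N"
    have fLO: "fL s \<in> ostates N" using fLs s by blast
    have "\<forall>j<N. T s ! j = fP (fL s) ! j"
    proof (intro allI impI)
      fix j assume j: "j < N"
      have "fP (fL s) ! j = fL s ! \<rho> j" using fPs fLO j by blast
      also have "\<dots> = h.sig (\<rho> j) (s ! \<rho> j)" using fLs s rlt[OF j] by blast
      also have "\<dots> = T s ! h.pi (\<rho> j)" using h.rep[OF s rlt[OF j]] by simp
      also have "\<dots> = T s ! j" using pr[OF j] by simp
      finally show "T s ! j = fP (fL s) ! j" by simp
    qed
    moreover have "T s \<in> ostates N" using h.maps[OF s] .
    moreover have "fP (fL s) \<in> ostates N" using fPs fLO by blast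
    ultimately show "T s = (fP \<circ> fL) s" using eq_ostates by simp
  qed
  moreover have "fP \<circ> fL \<in> local_swap_comps N" using lsc_comp[OF fP fL] .
  ultimately show ?thesis by blast
qed

end
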